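(* Fix integers $n\ge m\ge 0$, an integer $N_T\ge 1$, and a target state $Q$, i.e. a nonzero homogeneous polynomial of degree $n-m$ in the $N_T$ variables $a^\dagger_1,\dots,a^\dagger_{N_T}$. Suppose the target $Q$ can be generated (in the sense defined in the context) from some $N$-mode Fock input with occupation numbers $(n_1,\dots,n_N)$, $\sum_i n_i=n$, heralded by some pattern $(m_1,\dots,m_M)$ on the last $M$ modes with $\sum_j m_j=m$ (where $N-M\ge N_T$). Then there exist an integer $N'$ and a number $M'$ of heralding modes such that $Q$ can also be generated from the $N'$-mode input with exactly one photon in each of the modes $1,\dots,n$ and vacuum in all other modes (i.e. the state $\prod_{i=1}^n a^\dagger_i|0\rangle$), heralded by a pattern in which each heralding mode that receives a photon receives exactly one, with $m$ photons in total, i.e. the pattern $(1,1,\dots,1)$ on $m$ heralding modes, any further heralding modes being heralded on vacuum. Consequently, if $Q$ cannot be generated from $\prod_{i=1}^n a^\dagger_i|0\rangle$ with the single-photon heralding pattern $(1,\dots,1)$ on $m$ modes (together with arbitrary vacuum heralding), then $Q$ cannot be generated from any $n$-photon multi-mode Fock input with any heralding pattern containing $m$ photons.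
   Context: Heralded linear-optical state generation model. Multi-mode states with a fixed photon number are represented as homogeneous polynomials in commuting variables $a^\dagger_1,\dots,a^\dagger_N$ (creation operators) applied to the vacuum $|0\rangle$. Given $N$ modes, an arbitrary complex $N\times N$ matrix $A$ (not required to be unitary; unitarity can be recovered by rescaling and embedding in a larger mode space), and a Fock input $\prod_{i=1}^N \frac{1}{\sqrt{n_i!}}(a^\dagger_{i,\mathrm{in}})^{n_i}|0\rangle$ with $n=\sum_i n_i$ photons, the output is $F(a^\dagger_1,\dots,a^\dagger_N)|0\rangle$ with $F=\prod_{i=1}^N\frac{1}{\sqrt{n_i!}}\big(\sum_{j=1}^N A_{i,j}a^\dagger_j\big)^{n_i}$. Heralding the last $M$ modes on the photon-number pattern $(m_1,\dots,m_M)$ (entries $\ge 0$; a $0$ entry means heralding on vacuum), $m=\sum_j m_j$, produces the unnormalised state $G(a^\dagger_1,\dots,a^\dagger_{N-M})|0\rangle$ with $G=\frac{1}{\prod_j m_j!}\,\frac{\partial^{m} F}{\partial (a^\dagger_{N-M+1})^{m_1}\cdots\partial (a^\dagger_{N})^{m_M}}\Big|_{a^\dagger_{N-M+1}=\cdots=a^\dagger_N=0}$. A target state $Q$ on $N_T\le N-M$ modes is regarded as a polynomial in $a^\dagger_1,\dots,a^\dagger_{N-M}$ (modes $N_T+1,\dots,N-M$ in vacuum). The target $Q$ can be generated from the given input and heralding pattern if there exist a complex $N\times N$ matrix $A$ and $\gamma\in\mathbb{C}$ with $\gamma G=Q$ as polynomials (this forces the heralding amplitude $1/\gamma$ to be nonzero).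 *)

theory Defs
  imports Complex_Main "HOL-Library.Poly_Mapping"
begin

text \<open>Multivariate polynomials over the complex numbers in commuting variables
  indexed by nat (variable i stands for the creation operator of mode i):
  finitely supported maps from monomials (exponent vectors) to coefficients,
  with the convolution product provided by Poly_Mapping.\<close>

type_synonym mpoly = "(nat \<Rightarrow>\<^sub>0 nat) \<Rightarrow>\<^sub>0 complex"

definition mconst :: "complex \<Rightarrow> mpoly" where
  "mconst c = Poly_Mapping.single 0 c"

definition mvar :: "nat \<Rightarrow> mpoly" where
  "mvar i = Poly_Mapping.single (Poly_Mapping.single i 1) 1"

definition mpderiv :: "nat \<Rightarrow> mpoly \<Rightarrow> mpoly" where
  "mpderiv k p = (\<Sum>(\<alpha>::nat \<Rightarrow>\<^sub>0 nat)\<in>Poly_Mapping.keys p.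
      Poly_Mapping.single (\<alpha> - Poly_Mapping.single k 1)
        (of_nat (Poly_Mapping.lookup \<alpha> k) * (Poly_Mapping.lookup p \<alpha> :: complex)))"

definition mzero_vars :: "nat set \<Rightarrow> mpoly \<Rightarrow> mpoly" where
  "mzero_vars S p = (\<Sum>(\<alpha>::nat \<Rightarrow>\<^sub>0 nat)\<in>Poly_Mapping.keys p.
      if (\<forall>k\<in>S. Poly_Mapping.lookup \<alpha> k = 0) then Poly_Mapping.single \<alpha> (Poly_Mapping.lookup p \<alpha>) else 0)"

definition mdeg :: "(nat \<Rightarrow>\<^sub>0 nat) \<Rightarrow> nat" where
  "mdeg \<alpha> = (\<Sum>k\<in>Poly_Mapping.keys \<alpha>. Poly_Mapping.lookup \<alpha> k)"

definition homogeneous :: "nat \<Rightarrow> mpoly \<Rightarrow> bool" where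
  "homogeneous d p \<longleftrightarrow> (\<forall>\<alpha>\<in>Poly_Mapping.keys p. mdeg \<alpha> = d)"

definition vars_in :: "nat set \<Rightarrow> mpoly \<Rightarrow> bool" where
  "vars_in S p \<longleftrightarrow> (\<forall>\<alpha>\<in>Poly_Mapping.keys p. Poly_Mapping.keys \<alpha> \<subseteq> S)"

text \<open>Output polynomial F of the linear-optical network with (arbitrary complex)
  matrix A on modes 1..N and Fock input with occupation numbers nin i (i = 1..N).\<close>
definition output_poly :: "nat \<Rightarrow> (nat \<Rightarrow> nat \<Rightarrow> complex) \<Rightarrow> (nat \<Rightarrow> nat) \<Rightarrow> mpoly" where
  "output_poly N A nin = (\<Prod>i\<in>{1..N}.
      mconst (complex_of_real (1 / sqrt (real (fact (nin i))))) *
      (\<Sum>j\<in>{1..N}. mconst (A i j) * mvar j) ^ nin i)"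

definition heralded_poly ::
  "nat \<Rightarrow> nat \<Rightarrow> (nat \<Rightarrow> nat \<Rightarrow> complex) \<Rightarrow> (nat \<Rightarrow> nat) \<Rightarrow> (nat \<Rightarrow> nat) \<Rightarrow> mpoly" where
  "heralded_poly N M A nin mpat =
     mconst (1 / of_nat (\<Prod>j\<in>{1..M}. fact (mpat j))) *
     mzero_vars {N - M + 1..N}
       (foldr (\<lambda>j p. (mpderiv (N - M + j) ^^ mpat j) p) [1..<M + 1]
          (output_poly N A nin))"

definition generable :: "nat \<Rightarrow> nat \<Rightarrow> (nat \<Rightarrow> nat) \<Rightarrow> (nat \<Rightarrow> nat) \<Rightarrow> mpoly \<Rightarrow> bool" where
  "generable N M nin mpat Q \<longleftrightarrow>
     (\<exists>A :: nat \<Rightarrow> nat \<Rightarrow> complex. \<exists>\<gamma> :: complex.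
        mconst \<gamma> * heralded_poly N M A nin mpat = Q)"

end

theory Submission
  imports Defs
begin


lemma pm_expand: "f = (\<Sum>a\<in>Poly_Mapping.keys f. Poly_Mapping.single a (Poly_Mapping.lookup f a))"
  for f :: "'a \<Rightarrow>\<^sub>0 'b::comm_monoid_add"
proof (rule poly_mapping_eqI)
  fix k
  show "Poly_Mapping.lookup f k = Poly_Mapping.lookup (\<Sum>a\<in>Poly_Mapping.keys f. Poly_Mapping.single a (Poly_Mapping.lookup f a)) k"
    by (simp add: lookup_sum lookup_single when_def in_keys_iff)
qed

lemma mconst_0[simp]: "mconst 0 = 0" by (simp add: mconst_def)
lemma mconst_1[simp]: "mconst 1 = 1" by (simp add: mconst_def)
lemma mconst_add: "mconst (a + b) = mconst a + mconst b" by (simp add: mconst_def single_add)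
lemma mconst_mult: "mconst (a * b) = mconst a * mconst b" by (simp add: mconst_def mult_single)
lemma mconst_prod: "mconst (\<Prod>i\<in>S. f i) = (\<Prod>i\<in>S. mconst (f i))"
  by (induction S rule: infinite_finite_induct) (auto simp: mconst_mult)
lemma mconst_single: "mconst c * Poly_Mapping.single a d = Poly_Mapping.single a (c * d)"
  by (simp add: mconst_def mult_single)

definition mmon :: "(nat \<Rightarrow> mpoly) \<Rightarrow> (nat \<Rightarrow>\<^sub>0 nat) \<Rightarrow> mpoly" where
  "mmon f a = (\<Prod>k\<in>Poly_Mapping.keys a. f k ^ Poly_Mapping.lookup a k)"

definition msubst :: "(nat \<Rightarrow> mpoly) \<Rightarrow> mpoly \<Rightarrow> mpoly" where
  "msubst f p = (\<Sum>a\<in>Poly_Mapping.keys p. mconst (Poly_Mapping.lookup p a) * mmon f a)"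

lemma mmon_superset: "finite U \<Longrightarrow> Poly_Mapping.keys a \<subseteq> U \<Longrightarrow>
   mmon f a = (\<Prod>k\<in>U. f k ^ Poly_Mapping.lookup a k)"
  unfolding mmon_def by (rule prod.mono_neutral_left) (auto simp: in_keys_iff)

lemma mmon_add: "mmon f (a + b) = mmon f a * mmon f b"
proof -
  let ?U = "Poly_Mapping.keys a \<union> Poly_Mapping.keys b"
  have "mmon f (a + b) = (\<Prod>k\<in>?U. f k ^ Poly_Mapping.lookup (a + b) k)"
    by (rule mmon_superset) (auto simp: keys_add)
  also have "\<dots> = (\<Prod>k\<in>?U. f k ^ Poly_Mapping.lookup a k) * (\<Prod>k\<in>?U. f k ^ Poly_Mapping.lookup b k)"
    by (simp add: lookup_add power_add prod.distrib)
  also have "\<dots> = mmon f a * mmon f b"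
    by (subst (1 2) mmon_superset[where U="?U"]) auto
  finally show ?thesis .
qed

lemma mmon_zero[simp]: "mmon f 0 = 1" by (simp add: mmon_def)
lemma mmon_single1[simp]: "mmon f (Poly_Mapping.single k 1) = f k" by (simp add: mmon_def)

lemma msubst_superset: "finite S \<Longrightarrow> Poly_Mapping.keys p \<subseteq> S \<Longrightarrow>
  msubst f p = (\<Sum>a\<in>S. mconst (Poly_Mapping.lookup p a) * mmon f a)"
  unfolding msubst_def by (rule sum.mono_neutral_left) (auto simp: in_keys_iff)

lemma msubst_add: "msubst f (p + q) = msubst f p + msubst f q"
proof -
  let ?U = "Poly_Mapping.keys p \<union> Poly_Mapping.keys q"
  have "msubst f (p + q) = (\<Sum>a\<in>?U. mconst (Poly_Mapping.lookup (p + q) a) * mmon f a)"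
    by (rule msubst_superset) (auto simp: keys_add)
  also have "\<dots> = (\<Sum>a\<in>?U. mconst (Poly_Mapping.lookup p a) * mmon f a) + (\<Sum>a\<in>?U. mconst (Poly_Mapping.lookup q a) * mmon f a)"
    by (simp add: lookup_add mconst_add distrib_right sum.distrib)
  also have "\<dots> = msubst f p + msubst f q"
    by (subst (1 2) msubst_superset[where S="?U"]) auto
  finally show ?thesis .
qed

lemma msubst_zero[simp]: "msubst f 0 = 0" by (simp add: msubst_def)

lemma msubst_sum: "msubst f (\<Sum>i\<in>S. g i) = (\<Sum>i\<in>S. msubst f (g i))"
  by (induction S rule: infinite_finite_induct) (auto simp: msubst_add)

lemma msubst_single: "msubst f (Poly_Mapping.single a c) = mconst c * mmon f a"
  by (cases "c = 0") (auto simp: msubst_def)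

lemma msubst_mult: "msubst f (p * q) = msubst f p * msubst f q"
proof -
  have "p * q = (\<Sum>a\<in>Poly_Mapping.keys p. Poly_Mapping.single a (Poly_Mapping.lookup p a)) *
                (\<Sum>b\<in>Poly_Mapping.keys q. Poly_Mapping.single b (Poly_Mapping.lookup q b))"
    using pm_expand[of p] pm_expand[of q] by simp
  also have "\<dots> = (\<Sum>a\<in>Poly_Mapping.keys p. \<Sum>b\<in>Poly_Mapping.keys q.
      Poly_Mapping.single (a + b) (Poly_Mapping.lookup p a * Poly_Mapping.lookup q b))"
    by (simp only: sum_product mult_single)
  finally have "msubst f (p * q) = (\<Sum>a\<in>Poly_Mapping.keys p. \<Sum>b\<in>Poly_Mapping.keys q.
      msubst f (Poly_Mapping.single (a + b) (Poly_Mapping.lookup p a * Poly_Mapping.lookup q b)))"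
    by (simp add: msubst_sum)
  also have "\<dots> = (\<Sum>a\<in>Poly_Mapping.keys p. \<Sum>b\<in>Poly_Mapping.keys q.
      (mconst (Poly_Mapping.lookup p a) * mmon f a) * (mconst (Poly_Mapping.lookup q b) * mmon f b))"
    by (intro sum.cong refl) (simp add: msubst_single mmon_add mconst_mult algebra_simps)
  also have "\<dots> = msubst f p * msubst f q"
    unfolding msubst_def by (rule sum_product[symmetric])
  finally show ?thesis .
qed

lemma msubst_mconst[simp]: "msubst f (mconst c) = mconst c"
  using msubst_single[of f 0 c] by (simp add: mconst_def)

lemma msubst_one[simp]: "msubst f 1 = 1"
  using msubst_mconst[of f 1] by simp

lemma msubst_mvar[simp]: "msubst f (mvar k) = f k"
  unfolding mvar_def by (simp add: msubst_single mmon_def)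

lemma msubst_prod: "msubst f (\<Prod>i\<in>S. g i) = (\<Prod>i\<in>S. msubst f (g i))"
  by (induction S rule: infinite_finite_induct) (auto simp: msubst_mult)

lemma msubst_power: "msubst f (p ^ k) = msubst f p ^ k"
  by (induction k) (auto simp: msubst_mult)

lemma msubst_prod_list: "msubst f (prod_list xs) = prod_list (map (msubst f) xs)"
  by (induction xs) (auto simp: msubst_mult)

lemma mvar_power: "mvar k ^ e = Poly_Mapping.single (Poly_Mapping.single k e) 1"
  by (induction e) (auto simp: mvar_def mult_single single_add[symmetric])

lemma mmon_mvar: "mmon mvar a = Poly_Mapping.single a 1"
proof -
  have "\<And>S. finite S \<Longrightarrow> (\<Prod>k\<in>S. mvar k ^ Poly_Mapping.lookup a k) =
      Poly_Mapping.single (\<Sum>k\<in>S. Poly_Mapping.single k (Poly_Mapping.lookup a k)) 1"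
  proof -
    fix S :: "nat set" assume "finite S"
    then show "(\<Prod>k\<in>S. mvar k ^ Poly_Mapping.lookup a k) =
      Poly_Mapping.single (\<Sum>k\<in>S. Poly_Mapping.single k (Poly_Mapping.lookup a k)) 1"
      by (induction S rule: finite_induct) (auto simp: mvar_power mult_single)
  qed
  then show ?thesis unfolding mmon_def using pm_expand[of a] by simp
qed

lemma mpoly_induct:
  fixes P :: "mpoly \<Rightarrow> bool"
  assumes c: "\<And>c. P (mconst c)" and v: "\<And>k. P (mvar k)"
    and a: "\<And>p q. P p \<Longrightarrow> P q \<Longrightarrow> P (p + q)"
    and m: "\<And>p q. P p \<Longrightarrow> P q \<Longrightarrow> P (p * q)"
  shows "P p"
proof -
  have P0: "P 0" using c[of 0] by simp
  have P1: "P 1" using c[of 1] by simp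
  have Psum: "\<And>S g. (\<And>i. i \<in> S \<Longrightarrow> P (g i)) \<Longrightarrow> P (\<Sum>i\<in>S. g i)"
  proof -
    fix S and g :: "_ \<Rightarrow> mpoly" assume h: "\<And>i. i \<in> S \<Longrightarrow> P (g i)"
    show "P (\<Sum>i\<in>S. g i)"
      using h by (induction S rule: infinite_finite_induct) (auto simp: P0 a)
  qed
  have Ppow: "\<And>q e. P q \<Longrightarrow> P (q ^ e)"
  proof -
    fix q :: mpoly and e :: nat assume "P q" then show "P (q ^ e)"
      by (induction e) (auto simp: P1 m)
  qed
  have Pprod: "\<And>S g. (\<And>i. i \<in> S \<Longrightarrow> P (g i)) \<Longrightarrow> P (\<Prod>i\<in>S. g i)"
  proof -
    fix S and g :: "_ \<Rightarrow> mpoly" assume h: "\<And>i. i \<in> S \<Longrightarrow> P (g i)"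
    show "P (\<Prod>i\<in>S. g i)"
      using h by (induction S rule: infinite_finite_induct) (auto simp: P1 m)
  qed
  have "p = (\<Sum>a\<in>Poly_Mapping.keys p. mconst (Poly_Mapping.lookup p a) * mmon mvar a)"
    by (subst pm_expand) (simp add: mmon_mvar mconst_single)
  also have "P \<dots>"
    by (intro Psum m c) (unfold mmon_def, intro Pprod Ppow v)
  finally show ?thesis .
qed

lemma msubst_compose: "msubst g (msubst f p) = msubst (\<lambda>i. msubst g (f i)) p"
  by (induction p rule: mpoly_induct) (auto simp: msubst_add msubst_mult)



lemma mpderiv_superset: "finite S \<Longrightarrow> Poly_Mapping.keys p \<subseteq> S \<Longrightarrow>
  mpderiv k p = (\<Sum>a\<in>S. Poly_Mapping.single (a - Poly_Mapping.single k 1)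
        (of_nat (Poly_Mapping.lookup a k) * Poly_Mapping.lookup p a))"
  unfolding mpderiv_def by (rule sum.mono_neutral_left) (auto simp: in_keys_iff)

lemma mpderiv_add: "mpderiv k (p + q) = mpderiv k p + mpderiv k q"
proof -
  let ?U = "Poly_Mapping.keys p \<union> Poly_Mapping.keys q"
  have "mpderiv k (p + q) = (\<Sum>a\<in>?U. Poly_Mapping.single (a - Poly_Mapping.single k 1)
        (of_nat (Poly_Mapping.lookup a k) * Poly_Mapping.lookup (p + q) a))"
    by (rule mpderiv_superset) (auto simp: keys_add)
  also have "\<dots> = (\<Sum>a\<in>?U. Poly_Mapping.single (a - Poly_Mapping.single k 1)
        (of_nat (Poly_Mapping.lookup a k) * Poly_Mapping.lookup p a)) +
       (\<Sum>a\<in>?U. Poly_Mapping.single (a - Poly_Mapping.single k 1)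
        (of_nat (Poly_Mapping.lookup a k) * Poly_Mapping.lookup q a))"
    by (simp add: lookup_add distrib_left single_add sum.distrib)
  also have "\<dots> = mpderiv k p + mpderiv k q"
    by (subst (1 2) mpderiv_superset[where S="?U"]) auto
  finally show ?thesis .
qed

lemma mpderiv_zero[simp]: "mpderiv k 0 = 0" by (simp add: mpderiv_def)

lemma mpderiv_sum: "mpderiv k (\<Sum>i\<in>S. g i) = (\<Sum>i\<in>S. mpderiv k (g i))"
  by (induction S rule: infinite_finite_induct) (auto simp: mpderiv_add)

lemma mpderiv_single: "mpderiv k (Poly_Mapping.single a c) =
   Poly_Mapping.single (a - Poly_Mapping.single k 1) (of_nat (Poly_Mapping.lookup a k) * c)"
  by (cases "c = 0") (auto simp: mpderiv_def)

lemma shift_key: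
  fixes a b :: "nat \<Rightarrow>\<^sub>0 nat"
  shows "Poly_Mapping.single (a - Poly_Mapping.single k 1 + b) (of_nat (Poly_Mapping.lookup a k) * x) =
         Poly_Mapping.single (a + b - Poly_Mapping.single k 1) (of_nat (Poly_Mapping.lookup a k) * (x::complex))"
proof (cases "Poly_Mapping.lookup a k = 0")
  case True then show ?thesis by simp
next
  case False
  have "a - Poly_Mapping.single k 1 + b = a + b - Poly_Mapping.single k 1"
    by (rule poly_mapping_eqI) (use False in \<open>auto simp: lookup_minus lookup_add lookup_single when_def\<close>)
  then show ?thesis by simp
qed

lemma mpderiv_single_mult: "mpderiv k (Poly_Mapping.single a c * Poly_Mapping.single b d) =
   mpderiv k (Poly_Mapping.single a c) * Poly_Mapping.single b d +
   Poly_Mapping.single a c * mpderiv k (Poly_Mapping.single b d)"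
proof -
  have 1: "Poly_Mapping.single (a - Poly_Mapping.single k 1 + b) (of_nat (Poly_Mapping.lookup a k) * (c * d)) =
         Poly_Mapping.single (a + b - Poly_Mapping.single k 1) (of_nat (Poly_Mapping.lookup a k) * (c * d))"
    by (rule shift_key)
  have 2: "Poly_Mapping.single (b - Poly_Mapping.single k 1 + a) (of_nat (Poly_Mapping.lookup b k) * (c * d)) =
         Poly_Mapping.single (b + a - Poly_Mapping.single k 1) (of_nat (Poly_Mapping.lookup b k) * (c * d))"
    by (rule shift_key)
  show ?thesis
    using 1 2 by (simp add: mpderiv_single mult_single lookup_add single_add[symmetric] algebra_simps)
qed

lemma mpderiv_mult: "mpderiv k (p * q) = mpderiv k p * q + p * mpderiv k q"
proof -
  have "p * q = (\<Sum>a\<in>Poly_Mapping.keys p. Poly_Mapping.single a (Poly_Mapping.lookup p a)) *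
                (\<Sum>b\<in>Poly_Mapping.keys q. Poly_Mapping.single b (Poly_Mapping.lookup q b))"
    using pm_expand[of p] pm_expand[of q] by simp
  also have "\<dots> = (\<Sum>a\<in>Poly_Mapping.keys p. \<Sum>b\<in>Poly_Mapping.keys q.
      Poly_Mapping.single a (Poly_Mapping.lookup p a) * Poly_Mapping.single b (Poly_Mapping.lookup q b))"
    by (simp only: sum_product)
  finally have "mpderiv k (p * q) = (\<Sum>a\<in>Poly_Mapping.keys p. \<Sum>b\<in>Poly_Mapping.keys q.
      mpderiv k (Poly_Mapping.single a (Poly_Mapping.lookup p a)) * Poly_Mapping.single b (Poly_Mapping.lookup q b) +
      Poly_Mapping.single a (Poly_Mapping.lookup p a) * mpderiv k (Poly_Mapping.single b (Poly_Mapping.lookup q b)))"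
    by (simp add: mpderiv_sum mpderiv_single_mult)
  also have "\<dots> = (\<Sum>a\<in>Poly_Mapping.keys p. mpderiv k (Poly_Mapping.single a (Poly_Mapping.lookup p a))) *
        (\<Sum>b\<in>Poly_Mapping.keys q. Poly_Mapping.single b (Poly_Mapping.lookup q b)) +
      (\<Sum>a\<in>Poly_Mapping.keys p. Poly_Mapping.single a (Poly_Mapping.lookup p a)) *
        (\<Sum>b\<in>Poly_Mapping.keys q. mpderiv k (Poly_Mapping.single b (Poly_Mapping.lookup q b)))"
    by (simp only: sum_product sum.distrib)
  also have "\<dots> = mpderiv k p * q + p * mpderiv k q"
    by (simp only: mpderiv_sum[symmetric] pm_expand[symmetric])
  finally show ?thesis .
qed

lemma mpderiv_mconst[simp]: "mpderiv k (mconst c) = 0"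
  by (simp add: mconst_def mpderiv_single)

lemma mpderiv_mvar: "mpderiv k (mvar j) = mconst (if j = k then 1 else 0)"
  by (auto simp: mvar_def mpderiv_single mconst_def lookup_single when_def)

lemma mpderiv_mconst_mult: "mpderiv k (mconst c * p) = mconst c * mpderiv k p"
  by (simp add: mpderiv_mult)

lemma chain_rule:
  assumes "\<And>i. mpderiv j (f i) = mconst (if i = k then 1 else 0)"
  shows "mpderiv j (msubst f p) = msubst f (mpderiv k p)"
  by (induction p rule: mpoly_induct)
     (auto simp: assms mpderiv_mvar msubst_add msubst_mult mpderiv_add mpderiv_mult)

lemma chain_foldr:
  assumes "\<And>t i. t \<in> set xs \<Longrightarrow> mpderiv (d' t) (f i) = mconst (if i = d t then 1 else 0)"
  shows "foldr (\<lambda>t. mpderiv (d' t)) xs (msubst f p) = msubst f (foldr (\<lambda>t. mpderiv (d t)) xs p)"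
  using assms by (induction xs) (auto intro: chain_rule)

lemma foldr_mconst: "foldr (\<lambda>t. mpderiv (d t)) xs (mconst c * p) = mconst c * foldr (\<lambda>t. mpderiv (d t)) xs p"
  by (induction xs) (auto simp: mpderiv_mconst_mult)

lemma msubst_mconst_mult: "msubst f (mconst c * p) = mconst c * msubst f p"
  by (simp add: msubst_mult)

lemma mzero_vars_msubst: "mzero_vars S p = msubst (\<lambda>j. if j \<in> S then 0 else mvar j) p"
  unfolding mzero_vars_def msubst_def
proof (rule sum.cong[OF refl])
  fix a assume a: "a \<in> Poly_Mapping.keys p"
  show "(if \<forall>k\<in>S. Poly_Mapping.lookup a k = 0 then Poly_Mapping.single a (Poly_Mapping.lookup p a) else 0) =
    mconst (Poly_Mapping.lookup p a) * mmon (\<lambda>j. if j \<in> S then 0 else mvar j) a"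
  proof (cases "\<forall>k\<in>S. Poly_Mapping.lookup a k = 0")
    case True
    then have "mmon (\<lambda>j. if j \<in> S then 0 else mvar j) a = mmon mvar a"
      unfolding mmon_def by (intro prod.cong refl) (auto simp: in_keys_iff)
    then show ?thesis using True by (simp add: mmon_mvar mconst_single)
  next
    case False
    then obtain k where k: "k \<in> S" "Poly_Mapping.lookup a k \<noteq> 0" by blast
    have "mmon (\<lambda>j. if j \<in> S then 0 else mvar j) a = 0"
      unfolding mmon_def by (rule prod_zero) (use k in \<open>auto simp: in_keys_iff intro!: bexI[of _ k]\<close>)
    then show ?thesis unfolding if_not_P[OF False] by simp
  qed
qed



lemma foldr_rep: "foldr D (replicate k j) p = (D j ^^ k) p"
  by (induction k) auto

lemma foldr_concat_rep:
  "foldr (\<lambda>j. D j ^^ c j) xs p = foldr D (concat (map (\<lambda>j. replicate (c j) j) xs)) p"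
  by (induction xs arbitrary: p) (auto simp: foldr_rep)

lemma prod_list_concat_rep:
  "prod_list (map L (concat (map (\<lambda>i. replicate (c i) i) xs))) = prod_list (map (\<lambda>i. L i ^ c i) xs)"
  by (induction xs) auto

lemma length_concat_rep:
  "length (concat (map (\<lambda>i. replicate (c i) i) xs)) = sum_list (map c xs)"
  by (induction xs) auto

lemma prod_list_upt: "prod_list (map f [Suc 0..<Suc N]) = (\<Prod>i\<in>{1..N}. f i)"
  by (induction N) (auto simp: atLeastAtMostSuc_conv mult.commute)

lemma sum_list_upt: "sum_list (map f [Suc 0..<Suc N]) = (\<Sum>i\<in>{1..N}. f i)"
  by (induction N) (auto simp: atLeastAtMostSuc_conv add.commute)

lemma prod_list_nth: "prod_list (map g xs) = (\<Prod>r\<in>{1..length xs}. g (xs ! (r - 1)))"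
proof -
  have "map g xs = map (\<lambda>r. g (xs ! (r - 1))) [Suc 0..<Suc (length xs)]"
    by (rule nth_equalityI) (simp_all del: upt_Suc add: nth_upt)
  then show ?thesis using prod_list_upt[of "\<lambda>r. g (xs ! (r - 1))" "length xs"] by (simp del: upt_Suc)
qed



theorem lemma1:
  fixes n m NT N M :: nat and nin mpat :: "nat \<Rightarrow> nat" and Q :: mpoly
  assumes "m \<le> n"
    and "NT \<ge> 1"
    and "Q \<noteq> 0"
    and "homogeneous (n - m) Q"
    and "vars_in {1..NT} Q"
    and "M \<le> N"
    and "NT \<le> N - M"
    and "(\<Sum>i\<in>{1..N}. nin i) = n"
    and "(\<Sum>j\<in>{1..M}. mpat j) = m"
    and "generable N M nin mpat Q"
  shows "\<exists>N' M' :: nat. n \<le> N' \<and> m \<le> M' \<and> M' \<le> N' \<and> NT \<le> N' - M' \<and>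
           generable N' M' (\<lambda>i. if i \<le> n then 1 else 0) (\<lambda>j. if j \<le> m then 1 else 0) Q"
proof -
  note MN = \<open>M \<le> N\<close>
  obtain A \<gamma> where gen: "mconst \<gamma> * heralded_poly N M A nin mpat = Q"
    using assms(10) unfolding generable_def by blast
  define K where "K = N - M"
  have KN: "K + M = N" using MN unfolding K_def by simp
  define hs where "hs = concat (map (\<lambda>s. replicate (mpat s) s) [1..<M+1])"
  define rs where "rs = concat (map (\<lambda>i. replicate (nin i) i) [1..<N+1])"
  define L where "L i = (\<Sum>j\<in>{1..N}. mconst (A i j) * mvar j)" for i
  define \<sigma> where "\<sigma> j = (if j \<le> K then mvar j else
      (\<Sum>t\<in>{t. t \<in> {1..m} \<and> K + hs ! (t - 1) = j}. mvar (K + n + t)))" for j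
  define A'' where "A'' i j = (if j \<le> K then A i j else if K + n < j then A i (K + hs ! (j - K - n - 1)) else 0)" for i j
  define A' where "A' r j = A'' (rs ! (r - 1)) j" for r j
  define \<pi> where "\<pi> j = (if j \<in> {1..N} then mvar j else 0)" for j
  define Dold where "Dold p = foldr (\<lambda>s. mpderiv (K + s)) hs p" for p
  define P where "P = (\<Prod>i\<in>{1..N}. L i ^ nin i)"
  define c0 where "c0 = (\<Prod>i\<in>{1..N}. complex_of_real (1 / sqrt (real (fact (nin i)))))"
  define \<kappa> where "\<kappa> = 1 / of_nat (\<Prod>j\<in>{1..M}. fact (mpat j)) * c0"
  define Zo where "Zo j = (if j \<in> {N - M + 1..N} then 0 else mvar j)" for j
  define N' where "N' = K + n + m"
  define M' where "M' = m"
  define nin' where "nin' = (\<lambda>i::nat. if i \<le> n then 1 else (0::nat))"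
  define mpat' where "mpat' = (\<lambda>j::nat. if j \<le> m then 1 else (0::nat))"
  define Zn where "Zn j = (if j \<in> {N' - M' + 1..N'} then 0 else mvar j)" for j

  have len_hs: "length hs = m"
    unfolding hs_def using assms(9) by (simp del: upt_Suc add: length_concat_rep sum_list_upt)
  have len_rs: "length rs = n"
    unfolding rs_def using assms(8) by (simp del: upt_Suc add: length_concat_rep sum_list_upt)
  have set_hs: "set hs \<subseteq> {1..M}"
    unfolding hs_def by auto
  have hs_nth: "hs ! (t - 1) \<in> {1..M}" if "t \<in> {1..m}" for t
  proof -
    have "t - 1 < length hs" using that len_hs by auto
    then have "hs ! (t - 1) \<in> set hs" by (rule nth_mem)
    then show ?thesis using set_hs by blast
  qed

  have out_old: "output_poly N A nin = mconst c0 * P"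
    unfolding output_poly_def P_def c0_def L_def
    by (simp add: prod.distrib mconst_prod)
  have D_eq: "foldr (\<lambda>j p. (mpderiv (N - M + j) ^^ mpat j) p) [1..<M + 1] q = Dold q" for q
    unfolding Dold_def hs_def K_def using foldr_concat_rep[where D="\<lambda>j. mpderiv (N - M + j)" and c=mpat] by simp
  have her_old: "heralded_poly N M A nin mpat = mconst \<kappa> * msubst Zo (Dold P)"
    unfolding heralded_poly_def D_eq out_old mzero_vars_msubst Zo_def[symmetric]
      Dold_def foldr_mconst msubst_mconst_mult \<kappa>_def mconst_mult
    by (simp add: Zo_def[abs_def] mult.assoc)

  have piL: "msubst \<pi> (L i) = L i" for i
    unfolding L_def msubst_sum msubst_mconst_mult msubst_mvar
    by (intro sum.cong refl) (simp add: \<pi>_def)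
  have piP: "msubst \<pi> P = P"
    unfolding P_def msubst_prod msubst_power piL ..
  have piD: "msubst \<pi> (Dold P) = Dold P"
  proof -
    have "Dold (msubst \<pi> P) = msubst \<pi> (Dold P)"
      unfolding Dold_def
    proof (rule chain_foldr)
      fix s i assume s: "s \<in> set hs"
      then have "K + s \<in> {1..N}" using set_hs KN by auto
      then show "mpderiv (K + s) (\<pi> i) = mconst (if i = K + s then 1 else 0)"
        by (auto simp: \<pi>_def mpderiv_mvar)
    qed
    then show ?thesis using piP by simp
  qed

  have Lnew_eq: "(\<Sum>j\<in>{1..N'}. mconst (A'' i j) * mvar j) = msubst \<sigma> (L i)" for i
  proof -
    have "msubst \<sigma> (L i) = (\<Sum>j\<in>{1..N}. mconst (A i j) * \<sigma> j)"
      unfolding L_def msubst_sum msubst_mconst_mult msubst_mvar ..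
    also have "\<dots> = (\<Sum>j\<in>{1..K}. mconst (A i j) * \<sigma> j) + (\<Sum>j\<in>{K+1..N}. mconst (A i j) * \<sigma> j)"
    proof -
      have "{1..N} = {1..K} \<union> {K+1..N}" using KN by auto
      then show ?thesis by (simp add: sum.union_disjoint)
    qed
    also have "(\<Sum>j\<in>{1..K}. mconst (A i j) * \<sigma> j) = (\<Sum>j\<in>{1..K}. mconst (A i j) * mvar j)"
      by (intro sum.cong refl) (simp add: \<sigma>_def)
    also have "(\<Sum>j\<in>{K+1..N}. mconst (A i j) * \<sigma> j) =
        (\<Sum>j\<in>{K+1..N}. \<Sum>t\<in>{t. t \<in> {1..m} \<and> K + hs ! (t - 1) = j}. mconst (A i (K + hs ! (t - 1))) * mvar (K + n + t))"
      by (intro sum.cong refl) (simp add: \<sigma>_def sum_distrib_left)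
    also have "\<dots> = (\<Sum>t\<in>{1..m}. mconst (A i (K + hs ! (t - 1))) * mvar (K + n + t))"
      by (rule sum.group) (use hs_nth KN in force)+
    finally have lhs: "msubst \<sigma> (L i) = (\<Sum>j\<in>{1..K}. mconst (A i j) * mvar j) +
        (\<Sum>t\<in>{1..m}. mconst (A i (K + hs ! (t - 1))) * mvar (K + n + t))" .
    have split3: "{1..N'} = {1..K} \<union> ({K+1..K+n} \<union> {K+n+1..K+n+m})" unfolding N'_def by auto
    have "(\<Sum>j\<in>{1..N'}. mconst (A'' i j) * mvar j) = (\<Sum>j\<in>{1..K}. mconst (A'' i j) * mvar j) +
        ((\<Sum>j\<in>{K+1..K+n}. mconst (A'' i j) * mvar j) + (\<Sum>j\<in>{K+n+1..K+n+m}. mconst (A'' i j) * mvar j))"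
      unfolding split3
      apply (subst sum.union_disjoint)
         apply simp
        apply simp
       apply force
      apply (subst sum.union_disjoint)
         apply simp
        apply simp
       apply force
      apply (rule refl)
      done
    also have "(\<Sum>j\<in>{1..K}. mconst (A'' i j) * mvar j) = (\<Sum>j\<in>{1..K}. mconst (A i j) * mvar j)"
      by (intro sum.cong refl) (simp add: A''_def)
    also have "(\<Sum>j\<in>{K+1..K+n}. mconst (A'' i j) * mvar j) = 0"
      by (intro sum.neutral) (simp add: A''_def)
    also have "(\<Sum>j\<in>{K+n+1..K+n+m}. mconst (A'' i j) * mvar j) =
        (\<Sum>t\<in>{1..m}. mconst (A'' i (t + (K + n))) * mvar (t + (K + n)))"
      using sum.shift_bounds_cl_nat_ivl[of "\<lambda>j. mconst (A'' i j) * mvar j" 1 "K + n" m]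
      by (simp add: add.commute add.left_commute)
    also have "\<dots> = (\<Sum>t\<in>{1..m}. mconst (A i (K + hs ! (t - 1))) * mvar (K + n + t))"
      by (intro sum.cong refl) (auto simp: A''_def add.commute add.left_commute)
    finally show ?thesis using lhs by simp
  qed

  have out_new: "output_poly N' A' nin' = msubst \<sigma> P"
  proof -
    have "output_poly N' A' nin' = (\<Prod>r\<in>{1..N'}. if r \<le> n then (\<Sum>j\<in>{1..N'}. mconst (A' r j) * mvar j) else 1)"
      unfolding output_poly_def by (intro prod.cong refl) (simp add: nin'_def)
    also have "\<dots> = (\<Prod>r\<in>{1..n}. if r \<le> n then (\<Sum>j\<in>{1..N'}. mconst (A' r j) * mvar j) else 1)"
      by (rule prod.mono_neutral_right) (auto simp: N'_def)
    also have "\<dots> = (\<Prod>r\<in>{1..n}. msubst \<sigma> (L (rs ! (r - 1))))"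
      using Lnew_eq by (intro prod.cong refl) (simp add: A'_def)
    also have "\<dots> = msubst \<sigma> (prod_list (map L rs))"
      by (simp add: msubst_prod prod_list_nth len_rs)
    also have "prod_list (map L rs) = P"
      unfolding rs_def prod_list_concat_rep P_def using prod_list_upt[of "\<lambda>i. L i ^ nin i" N] by simp
    finally show ?thesis .
  qed

  have D_new: "foldr (\<lambda>j p. (mpderiv (N' - M' + j) ^^ mpat' j) p) [1..<M' + 1] q =
      foldr (\<lambda>t. mpderiv (K + n + t)) [1..<m + 1] q" for q
    by (rule foldr_cong) (auto simp: N'_def M'_def mpat'_def)
  have chain_new: "foldr (\<lambda>t. mpderiv (K + n + t)) [1..<m + 1] (msubst \<sigma> P) =
      msubst \<sigma> (foldr (\<lambda>t. mpderiv (K + hs ! (t - 1))) [1..<m + 1] P)"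
  proof (rule chain_foldr)
    fix t i assume "t \<in> set [1..<m + 1]"
    then have t: "t \<in> {1..m}" by auto
    have h: "hs ! (t - 1) \<in> {1..M}" using hs_nth[OF t] .
    show "mpderiv (K + n + t) (\<sigma> i) = mconst (if i = K + hs ! (t - 1) then 1 else 0)"
    proof (cases "i \<le> K")
      case True then show ?thesis using t h by (auto simp: \<sigma>_def mpderiv_mvar)
    next
      case False
      have "mpderiv (K + n + t) (\<sigma> i) = (\<Sum>t'\<in>{t. t \<in> {1..m} \<and> K + hs ! (t - 1) = i}.
               (if t' = t then 1 else 0))"
        using False by (simp add: \<sigma>_def mpderiv_sum mpderiv_mvar if_distrib[of mconst] cong: if_cong)
      also have "\<dots> = (if t \<in> {t. t \<in> {1..m} \<and> K + hs ! (t - 1) = i} then 1 else 0)"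
        by (subst sum.delta) auto
      also have "\<dots> = mconst (if i = K + hs ! (t - 1) then 1 else 0)"
        using t by auto
      finally show ?thesis .
    qed
  qed
  have map_hs: "map (\<lambda>t. hs ! (t - 1)) [1..<m + 1] = hs"
    by (rule nth_equalityI) (simp_all del: upt_Suc add: nth_upt len_hs)
  have foldr_hs: "foldr (\<lambda>t. mpderiv (K + hs ! (t - 1))) [1..<m + 1] P = Dold P"
    unfolding Dold_def
    using foldr_map[of "\<lambda>s. mpderiv (K + s)" "\<lambda>t. hs ! (t - 1)" "[1..<m + 1]"] map_hs
    by (simp add: comp_def)
  have fact1: "(\<Prod>j\<in>{1..M'}. fact (mpat' j)) = (1::nat)"
    by (rule prod.neutral) (auto simp: mpat'_def M'_def)
  have her_new: "heralded_poly N' M' A' nin' mpat' = msubst Zn (msubst \<sigma> (Dold P))"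
    unfolding heralded_poly_def D_new out_new chain_new foldr_hs fact1 mzero_vars_msubst
    by (simp add: Zn_def[abs_def])

  have funeq: "(\<lambda>i. msubst (\<lambda>i. msubst Zn (\<sigma> i)) (\<pi> i)) = (\<lambda>i. msubst Zo (\<pi> i))"
  proof
    fix i
    show "msubst (\<lambda>i. msubst Zn (\<sigma> i)) (\<pi> i) = msubst Zo (\<pi> i)"
    proof (cases "i \<in> {1..N}")
      case False
      then have "\<pi> i = 0" unfolding \<pi>_def by auto
      then show ?thesis by simp
    next
      case True
      show ?thesis
      proof (cases "i \<le> K")
        case True then show ?thesis using \<open>i \<in> {1..N}\<close>
          by (simp add: \<pi>_def \<sigma>_def Zn_def Zo_def N'_def M'_def K_def)
      next
        case False
        have "msubst Zn (\<sigma> i) = 0"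
          using False by (simp add: \<sigma>_def msubst_sum Zn_def N'_def M'_def)
        then show ?thesis using False \<open>i \<in> {1..N}\<close>
          by (simp add: \<pi>_def Zo_def K_def)
      qed
    qed
  qed
  have key: "msubst Zn (msubst \<sigma> (Dold P)) = msubst Zo (Dold P)"
  proof -
    have "msubst Zn (msubst \<sigma> (Dold P)) = msubst Zn (msubst \<sigma> (msubst \<pi> (Dold P)))"
      using piD by simp
    also have "\<dots> = msubst (\<lambda>i. msubst (\<lambda>i. msubst Zn (\<sigma> i)) (\<pi> i)) (Dold P)"
      by (simp add: msubst_compose)
    also have "\<dots> = msubst (\<lambda>i. msubst Zo (\<pi> i)) (Dold P)"
      using funeq by simp
    also have "\<dots> = msubst Zo (msubst \<pi> (Dold P))"
      by (simp add: msubst_compose)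
    finally show ?thesis using piD by simp
  qed

  have "generable N' M' nin' mpat' Q"
    unfolding generable_def
  proof (intro exI)
    show "mconst (\<gamma> * \<kappa>) * heralded_poly N' M' A' nin' mpat' = Q"
      using gen unfolding her_new key her_old mconst_mult by (simp add: mult.assoc)
  qed
  moreover have "n \<le> N'" "m \<le> M'" "M' \<le> N'" "NT \<le> N' - M'"
    using assms(7) by (auto simp: N'_def M'_def K_def)
  ultimately show ?thesis unfolding nin'_def mpat'_def by blast
qed


end
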